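(* For a bigraph $X$, the poset $C(X^{K_2})$ is homotopy equivalent to the box complex $B_{/K_2}(X)$.
   Context: A graph is a set $V$ with a symmetric relation $E\subset V\times V$ (loops allowed). $K_2$ has vertices $0,1$ and edges $(0,1),(1,0)$, and is a bigraph via the identity coloring. A bigraph is a graph $X$ with a graph homomorphism $\varepsilon_X:X\to K_2$; $V_i(X)=\varepsilon_X^{-1}(i)$. $X^{K_2}$ is the graph whose vertices are maps $f:\{0,1\}\to V(X)$ with $f(0)\in V_0(X)$, $f(1)\in V_1(X)$, with $f,g$ adjacent iff $(f(0),g(1))\in E(X)$ and $(f(1),g(0))\in E(X)$. For a graph $G$, $C(G)$ is the poset of finite nonempty $\sigma\subset V(G)$ with $\sigma\times\sigma\subset E(G)$, ordered by inclusion. $B_{/K_2}(X)$ is the poset of pairs $(\sigma,\tau)$, $\sigma\subset V_0(X)$, $\tau\subset V_1(X)$ finite nonempty with $\sigma\times\tau\subset E(X)$, ordered componentwise by inclusion. Posets are regarded as spaces via geometric realizations of order complexes. *)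

theory Defs
  imports "HOL-Analysis.Analysis"
begin

definition is_graph :: "'v set \<Rightarrow> ('v \<times> 'v) set \<Rightarrow> bool" where
  "is_graph V E \<longleftrightarrow> E \<subseteq> V \<times> V \<and> sym E"

definition K2_V :: "nat set" where "K2_V = {0, 1}"
definition K2_E :: "(nat \<times> nat) set" where "K2_E = {(0, 1), (1, 0)}"

definition graph_hom :: "'v set \<Rightarrow> ('v \<times> 'v) set \<Rightarrow> 'w set \<Rightarrow> ('w \<times> 'w) set \<Rightarrow> ('v \<Rightarrow> 'w) \<Rightarrow> bool" where
  "graph_hom V E W F h \<longleftrightarrow> (\<forall>x\<in>V. h x \<in> W) \<and> (\<forall>(x, y)\<in>E. (h x, h y) \<in> F)"

definition is_bigraph :: "'v set \<Rightarrow> ('v \<times> 'v) set \<Rightarrow> ('v \<Rightarrow> nat) \<Rightarrow> bool" where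
  "is_bigraph V E eps \<longleftrightarrow> is_graph V E \<and> graph_hom V E K2_V K2_E eps"

definition part :: "'v set \<Rightarrow> ('v \<Rightarrow> nat) \<Rightarrow> nat \<Rightarrow> 'v set" where
  "part V eps i = {x \<in> V. eps x = i}"

text \<open>X^{K_2}: a vertex is a map f : {0,1} \<rightarrow> V(X) with f(0) \<in> V_0, f(1) \<in> V_1,
  represented as the pair (f 0, f 1).\<close>
definition expK2_V :: "'v set \<Rightarrow> ('v \<Rightarrow> nat) \<Rightarrow> ('v \<times> 'v) set" where
  "expK2_V V eps = part V eps 0 \<times> part V eps 1"

definition expK2_E :: "'v set \<Rightarrow> ('v \<times> 'v) set \<Rightarrow> ('v \<Rightarrow> nat) \<Rightarrow> (('v \<times> 'v) \<times> ('v \<times> 'v)) set" where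
  "expK2_E V E eps = {(f, g). f \<in> expK2_V V eps \<and> g \<in> expK2_V V eps \<and>
                              (fst f, snd g) \<in> E \<and> (snd f, fst g) \<in> E}"

definition clique_poset :: "'v set \<Rightarrow> ('v \<times> 'v) set \<Rightarrow> 'v set set" where
  "clique_poset V E = {\<sigma>. finite \<sigma> \<and> \<sigma> \<noteq> {} \<and> \<sigma> \<subseteq> V \<and> \<sigma> \<times> \<sigma> \<subseteq> E}"

definition box_poset :: "'v set \<Rightarrow> ('v \<times> 'v) set \<Rightarrow> ('v \<Rightarrow> nat) \<Rightarrow> ('v set \<times> 'v set) set" where
  "box_poset V E eps = {(\<sigma>, \<tau>). finite \<sigma> \<and> \<sigma> \<noteq> {} \<and> \<sigma> \<subseteq> part V eps 0 \<and>
                                finite \<tau> \<and> \<tau> \<noteq> {} \<and> \<tau> \<subseteq> part V eps 1 \<and> \<sigma> \<times> \<tau> \<subseteq> E}"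

definition box_le :: "'v set \<times> 'v set \<Rightarrow> 'v set \<times> 'v set \<Rightarrow> bool" where
  "box_le p q \<longleftrightarrow> fst p \<subseteq> fst q \<and> snd p \<subseteq> snd q"

text \<open>Points are functions P \<rightarrow> [0,1] with finite nonempty support which is a chain,
  summing to 1 (barycentric coordinates). The topology is the standard (weak/coherent)
  one: a set is open iff its intersection with every closed simplex (spanned by a
  finite chain) is open in that simplex, where a simplex carries the Euclidean
  (= product) topology.\<close>

definition is_chain_in :: "'a set \<Rightarrow> ('a \<Rightarrow> 'a \<Rightarrow> bool) \<Rightarrow> 'a set \<Rightarrow> bool" where
  "is_chain_in P le c \<longleftrightarrow> c \<subseteq> P \<and> (\<forall>x\<in>c. \<forall>y\<in>c. le x y \<or> le y x)"

definition supp :: "('a \<Rightarrow> real) \<Rightarrow> 'a set" where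
  "supp f = {x. f x \<noteq> 0}"

definition realization_carrier :: "'a set \<Rightarrow> ('a \<Rightarrow> 'a \<Rightarrow> bool) \<Rightarrow> ('a \<Rightarrow> real) set" where
  "realization_carrier P le = {f. finite (supp f) \<and> is_chain_in P le (supp f) \<and>
                                  (\<forall>x. 0 \<le> f x) \<and> sum f (supp f) = 1}"

definition closed_simplex :: "'a set \<Rightarrow> ('a \<Rightarrow> 'a \<Rightarrow> bool) \<Rightarrow> 'a set \<Rightarrow> ('a \<Rightarrow> real) set" where
  "closed_simplex P le c = {f \<in> realization_carrier P le. supp f \<subseteq> c}"

definition simplex_topology :: "'a set \<Rightarrow> ('a \<Rightarrow> 'a \<Rightarrow> bool) \<Rightarrow> 'a set \<Rightarrow> ('a \<Rightarrow> real) topology" where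
  "simplex_topology P le c =
     subtopology (product_topology (\<lambda>_. euclideanreal) UNIV) (closed_simplex P le c)"

definition realization_open :: "'a set \<Rightarrow> ('a \<Rightarrow> 'a \<Rightarrow> bool) \<Rightarrow> ('a \<Rightarrow> real) set \<Rightarrow> bool" where
  "realization_open P le U \<longleftrightarrow> U \<subseteq> realization_carrier P le \<and>
     (\<forall>c. finite c \<and> is_chain_in P le c \<longrightarrow>
          openin (simplex_topology P le c) (U \<inter> closed_simplex P le c))"

lemma istopology_realization_open: "istopology (realization_open P le)"
  unfolding istopology_def
proof safe
  fix S T assume S: "realization_open P le S" and T: "realization_open P le T"
  show "realization_open P le (S \<inter> T)"
    unfolding realization_open_def
  proof safe
    fix c assume c: "finite c" "is_chain_in P le c"
    have "S \<inter> T \<inter> closed_simplex P le c =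
          (S \<inter> closed_simplex P le c) \<inter> (T \<inter> closed_simplex P le c)" by blast
    then show "openin (simplex_topology P le c) (S \<inter> T \<inter> closed_simplex P le c)"
      using S T c unfolding realization_open_def by (metis openin_Int)
  qed (use S in \<open>auto simp: realization_open_def\<close>)
next
  fix K assume K: "\<forall>S\<in>K. realization_open P le S"
  show "realization_open P le (\<Union>K)"
    unfolding realization_open_def
  proof safe
    fix c assume c: "finite c" "is_chain_in P le c"
    have "\<Union>K \<inter> closed_simplex P le c = \<Union>((\<lambda>S. S \<inter> closed_simplex P le c) ` K)" by blast
    moreover have "\<forall>S\<in>K. openin (simplex_topology P le c) (S \<inter> closed_simplex P le c)"
      using K c unfolding realization_open_def by blast
    ultimately show "openin (simplex_topology P le c) (\<Union>K \<inter> closed_simplex P le c)"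
      by (metis (no_types, lifting) imageE openin_Union)
  qed (use K in \<open>auto simp: realization_open_def\<close>)
qed

definition realization :: "'a set \<Rightarrow> ('a \<Rightarrow> 'a \<Rightarrow> bool) \<Rightarrow> ('a \<Rightarrow> real) topology" where
  "realization P le = topology (realization_open P le)"

end

theory Submission
  imports Defs
begin

lemma openin_real: "openin (realization P le) U \<longleftrightarrow> realization_open P le U"
  by (simp add: realization_def istopology_realization_open)

lemma topspace_simplex: "topspace (simplex_topology P le c) = closed_simplex P le c"
  by (simp add: simplex_topology_def)

lemma closed_simplex_sub: "closed_simplex P le c \<subseteq> realization_carrier P le"
  by (auto simp: closed_simplex_def)

lemma topspace_real: "topspace (realization P le) = realization_carrier P le"
proof -
  have "realization_open P le (realization_carrier P le)"
    unfolding realization_open_def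
  proof safe
    fix c
    have "realization_carrier P le \<inter> closed_simplex P le c = topspace (simplex_topology P le c)"
      using closed_simplex_sub topspace_simplex by blast
    then show "openin (simplex_topology P le c) (realization_carrier P le \<inter> closed_simplex P le c)"
      by simp
  qed
  then show ?thesis
    by (metis openin_real openin_subset openin_topspace realization_open_def subset_antisym)
qed

lemma cont_from_real:
  assumes "\<And>x. x \<in> realization_carrier P le \<Longrightarrow> F x \<in> topspace Y"
    and "\<And>c. finite c \<Longrightarrow> is_chain_in P le c \<Longrightarrow> continuous_map (simplex_topology P le c) Y F"
  shows "continuous_map (realization P le) Y F"
  unfolding continuous_map_def topspace_real
proof safe
  fix U assume U: "openin Y U"
  show "openin (realization P le) {x \<in> realization_carrier P le. F x \<in> U}"
    unfolding openin_real realization_open_def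
  proof safe
    fix c assume c: "finite c" "is_chain_in P le c"
    have "{x \<in> realization_carrier P le. F x \<in> U} \<inter> closed_simplex P le c
       = {x \<in> topspace (simplex_topology P le c). F x \<in> U}"
      using closed_simplex_sub topspace_simplex by blast
    then show "openin (simplex_topology P le c) ({x \<in> realization_carrier P le. F x \<in> U} \<inter> closed_simplex P le c)"
      using assms(2)[OF c] U by (simp add: continuous_map_def)
  qed
qed (use assms in auto)

lemma cont_incl_simplex:
  assumes "finite c" "is_chain_in P le c"
  shows "continuous_map (simplex_topology P le c) (realization P le) id"
  unfolding continuous_map_def topspace_real topspace_simplex
proof safe
  fix x assume "x \<in> closed_simplex P le c" then show "id x \<in> realization_carrier P le"
    using closed_simplex_sub by auto
next
  fix U assume "openin (realization P le) U"
  then have "openin (simplex_topology P le c) (U \<inter> closed_simplex P le c)"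
    using assms by (simp add: openin_real realization_open_def)
  moreover have "{x \<in> closed_simplex P le c. id x \<in> U} = U \<inter> closed_simplex P le c" by auto
  ultimately show "openin (simplex_topology P le c) {x \<in> closed_simplex P le c. id x \<in> U}" by simp
qed

lemma cont_into_real:
  assumes "continuous_map Z (product_topology (\<lambda>_. euclideanreal) UNIV) G"
    and "\<And>z. z \<in> topspace Z \<Longrightarrow> G z \<in> closed_simplex Q le c" "finite c" "is_chain_in Q le c"
  shows "continuous_map Z (realization Q le) G"
proof -
  have "continuous_map Z (simplex_topology Q le c) G"
    unfolding simplex_topology_def using assms
    by (auto simp: continuous_map_in_subtopology)
  then show ?thesis
    using continuous_map_compose[OF _ cont_incl_simplex[OF assms(3,4)]] by (simp add: o_def)
qed

lemma cont_from_prod_real: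
  assumes F: "\<And>t x. t \<in> {0..1} \<Longrightarrow> x \<in> realization_carrier P le \<Longrightarrow> F (t, x) \<in> topspace Y"
    and C: "\<And>c. finite c \<Longrightarrow> is_chain_in P le c \<Longrightarrow>
          continuous_map (prod_topology (top_of_set {0..1::real}) (simplex_topology P le c)) Y F"
  shows "continuous_map (prod_topology (top_of_set {0..1::real}) (realization P le)) Y F"
  unfolding continuous_map_def
proof safe
  fix a b assume "(a, b) \<in> topspace (prod_topology (top_of_set {0..1::real}) (realization P le))"
  then show "F (a, b) \<in> topspace Y" using F by (simp add: topspace_real)
next
  fix U assume U: "openin Y U"
  define W where "W = {x \<in> topspace (prod_topology (top_of_set {0..1::real}) (realization P le)). F x \<in> U}"
  define Wc where "Wc c = {x \<in> topspace (prod_topology (top_of_set {0..1::real}) (simplex_topology P le c)). F x \<in> U}" for c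
  have Wc_open: "openin (prod_topology (top_of_set {0..1::real}) (simplex_topology P le c)) (Wc c)"
    if "finite c" "is_chain_in P le c" for c
    using C[OF that] U unfolding Wc_def continuous_map_def by blast
  have Wc_eq: "Wc c = W \<inter> ({0..1} \<times> closed_simplex P le c)" for c
    unfolding Wc_def W_def using closed_simplex_sub[of P le c]
    by (auto simp: topspace_real topspace_simplex)
  have "openin (prod_topology (top_of_set {0..1::real}) (realization P le)) W"
    unfolding openin_subopen[of _ W]
  proof safe
    fix t0 f0 assume tf: "(t0, f0) \<in> W"
    then have t0: "t0 \<in> {0..1}" and f0: "f0 \<in> realization_carrier P le"
      by (auto simp: W_def topspace_real)
    define c0 where "c0 = supp f0"
    have c0: "finite c0" "is_chain_in P le c0" using f0 by (auto simp: c0_def realization_carrier_def)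
    have f0c: "f0 \<in> closed_simplex P le c0" using f0 by (auto simp: c0_def closed_simplex_def)
    have "continuous_map (top_of_set {0..1::real}) (prod_topology (top_of_set {0..1::real}) (simplex_topology P le c0)) (\<lambda>t. (t, f0))"
      using f0c by (auto intro!: continuous_map_pairedI simp: topspace_simplex)
    then have "openin (top_of_set {0..1::real}) {t \<in> topspace (top_of_set {0..1::real}). (t, f0) \<in> Wc c0}"
      using Wc_open[OF c0] openin_continuous_map_preimage by blast
    then have "openin (top_of_set {0..1::real}) {t \<in> {0..1}. (t, f0) \<in> Wc c0}" by simp
    moreover have "t0 \<in> {t \<in> {0..1}. (t, f0) \<in> Wc c0}" using tf t0 f0c Wc_eq by auto
    ultimately obtain e where e: "e > 0" "\<And>t. t \<in> {0..1} \<Longrightarrow> dist t t0 < e \<Longrightarrow> (t, f0) \<in> Wc c0"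
      unfolding openin_euclidean_subtopology_iff by (metis (no_types, lifting) mem_Collect_eq)
    define I where "I = cball t0 (e/2) \<inter> {0..1}"
    define Ob where "Ob = ball t0 (e/2) \<inter> {0..1}"
    define N where "N = {f \<in> realization_carrier P le. \<forall>t\<in>I. (t, f) \<in> W}"
    have Icomp: "compactin (top_of_set {0..1::real}) I"
      by (auto simp: I_def compactin_subtopology compact_Int)
    have Oopen: "openin (top_of_set {0..1::real}) Ob"
      using openin_open_Int[of "ball t0 (e/2)" "{0..1}"] by (simp add: Ob_def Int_commute)
    have Nopen: "openin (realization P le) N"
      unfolding openin_real realization_open_def
    proof safe
      show "x \<in> realization_carrier P le" if "x \<in> N" for x using that by (auto simp: N_def)
      fix c assume c: "finite c" "is_chain_in P le c"
      have "N \<inter> closed_simplex P le c = {f \<in> closed_simplex P le c. \<forall>t\<in>I. (t, f) \<in> Wc c}"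
      proof -
        have "I \<subseteq> {0..1}" by (auto simp: I_def)
        show ?thesis
        proof (intro set_eqI iffI)
          fix f assume f: "f \<in> N \<inter> closed_simplex P le c"
          then have "\<forall>t\<in>I. (t, f) \<in> W" by (simp add: N_def)
          then show "f \<in> {f \<in> closed_simplex P le c. \<forall>t\<in>I. (t, f) \<in> Wc c}"
            using f \<open>I \<subseteq> {0..1}\<close> unfolding Wc_eq by auto
        next
          fix f assume f: "f \<in> {f \<in> closed_simplex P le c. \<forall>t\<in>I. (t, f) \<in> Wc c}"
          then have "\<forall>t\<in>I. (t, f) \<in> W" unfolding Wc_eq by auto
          then show "f \<in> N \<inter> closed_simplex P le c"
            using f closed_simplex_sub[of P le c] by (auto simp: N_def)
        qed
      qed
      moreover have "openin (simplex_topology P le c) {f \<in> closed_simplex P le c. \<forall>t\<in>I. (t, f) \<in> Wc c}"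
      proof (subst openin_subopen, intro ballI)
        fix f1 assume "f1 \<in> {f \<in> closed_simplex P le c. \<forall>t\<in>I. (t, f) \<in> Wc c}"
        then have f1: "f1 \<in> closed_simplex P le c" "\<forall>t\<in>I. (t, f1) \<in> Wc c" by auto
        have f1t: "f1 \<in> topspace (simplex_topology P le c)" using f1 by (simp add: topspace_simplex)
        have IW: "I \<times> {f1} \<subseteq> Wc c" using f1 by blast
        obtain U' V' where UV: "openin (top_of_set {0..1::real}) U'" "openin (simplex_topology P le c) V'"
            "I \<subseteq> U'" "f1 \<in> V'" "U' \<times> V' \<subseteq> Wc c"
          using tube_lemma_left[OF Wc_open[OF c] Icomp f1t IW] by blast
        have V'sub: "V' \<subseteq> closed_simplex P le c"
          using openin_subset[OF UV(2)] by (simp add: topspace_simplex)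
        have "V' \<subseteq> {f \<in> closed_simplex P le c. \<forall>t\<in>I. (t, f) \<in> Wc c}"
        proof
          fix f assume "f \<in> V'"
          then show "f \<in> {f \<in> closed_simplex P le c. \<forall>t\<in>I. (t, f) \<in> Wc c}"
            using V'sub UV(3,5) by blast
        qed
        then show "\<exists>T. openin (simplex_topology P le c) T \<and> f1 \<in> T \<and>
                 T \<subseteq> {f \<in> closed_simplex P le c. \<forall>t\<in>I. (t, f) \<in> Wc c}"
          using UV by blast
      qed
      ultimately show "openin (simplex_topology P le c) (N \<inter> closed_simplex P le c)" by simp
    qed
    have f0N: "f0 \<in> N"
      unfolding N_def
    proof safe
      show "f0 \<in> realization_carrier P le" by fact
      fix t assume "t \<in> I"
      then have "t \<in> {0..1}" "dist t t0 < e" using e by (auto simp: I_def dist_commute)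
      then show "(t, f0) \<in> W" using e(2) Wc_eq by auto
    qed
    show "\<exists>T. openin (prod_topology (top_of_set {0..1::real}) (realization P le)) T \<and> (t0, f0) \<in> T \<and> T \<subseteq> W"
    proof (intro exI conjI)
      show "openin (prod_topology (top_of_set {0..1::real}) (realization P le)) (Ob \<times> N)"
        using Oopen Nopen by (simp add: openin_prod_Times_iff)
      show "(t0, f0) \<in> Ob \<times> N" using e t0 f0N by (auto simp: Ob_def)
      show "Ob \<times> N \<subseteq> W" unfolding Ob_def N_def I_def by auto
    qed
  qed
  then show "openin (prod_topology (top_of_set {0..1::real}) (realization P le))
     {x \<in> topspace (prod_topology (top_of_set {0..1::real}) (realization P le)). F x \<in> U}"
    by (simp add: W_def)
qed

definition pw :: "('a \<Rightarrow> 'b) \<Rightarrow> 'a set \<Rightarrow> ('a \<Rightarrow> real) \<Rightarrow> 'b \<Rightarrow> real" where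
  "pw h S w = (\<lambda>q. sum w {x \<in> S. h x = q})"

definition push :: "('a \<Rightarrow> 'b) \<Rightarrow> ('a \<Rightarrow> real) \<Rightarrow> 'b \<Rightarrow> real" where
  "push h p = pw h (supp p) p"

definition Sx :: "('a \<Rightarrow> 'a \<Rightarrow> bool) \<Rightarrow> 'a set \<Rightarrow> ('a \<Rightarrow> real) \<Rightarrow> 'a \<Rightarrow> real" where
  "Sx le S p x = sum p {y \<in> S. le y x}"

definition fp :: "('a \<Rightarrow> 'a \<Rightarrow> bool) \<Rightarrow> 'a set \<Rightarrow> real \<Rightarrow> ('a \<Rightarrow> real) \<Rightarrow> 'a \<Rightarrow> real" where
  "fp le S t p x = min (Sx le S p x) (1 - t) - min (Sx le S p x - p x) (1 - t)"

definition gp :: "('a \<Rightarrow> 'a \<Rightarrow> bool) \<Rightarrow> 'a set \<Rightarrow> real \<Rightarrow> ('a \<Rightarrow> real) \<Rightarrow> 'a \<Rightarrow> real" where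
  "gp le S t p x = p x - fp le S t p x"

definition Hm :: "('a \<Rightarrow> 'b) \<Rightarrow> ('a \<Rightarrow> 'b) \<Rightarrow> ('a \<Rightarrow> 'a \<Rightarrow> bool) \<Rightarrow> 'a set \<Rightarrow> real \<Rightarrow> ('a \<Rightarrow> real) \<Rightarrow> 'b \<Rightarrow> real" where
  "Hm u v le S t p = (\<lambda>q. pw u S (fp le S t p) q + pw v S (gp le S t p) q)"

lemma pw_mono:
  assumes "finite T" "S \<subseteq> T" "\<And>x. x \<in> T - S \<Longrightarrow> w x = 0"
  shows "pw h T w = pw h S w"
  unfolding pw_def
proof
  fix q show "sum w {x \<in> T. h x = q} = sum w {x \<in> S. h x = q}"
    by (rule sum.mono_neutral_right) (use assms in auto)
qed

lemma pw_cong: "(\<And>x. x \<in> S \<Longrightarrow> w x = w' x) \<Longrightarrow> (\<And>x. x \<in> S \<Longrightarrow> h x = h' x) \<Longrightarrow> pw h S w = pw h' S w'"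
  unfolding pw_def by (intro ext sum.cong) auto

lemma sum_pw:
  assumes "finite S" "finite T" "h ` S \<subseteq> T"
  shows "sum (pw h S w) T = sum w S"
  unfolding pw_def using sum.group[OF assms] by simp

lemma supp_zero: "x \<notin> supp p \<Longrightarrow> p x = 0" by (simp add: supp_def)

lemma carrier_props:
  assumes "p \<in> realization_carrier P le"
  shows "finite (supp p)" "is_chain_in P le (supp p)" "\<And>x. 0 \<le> p x" "sum p (supp p) = 1"
  using assms by (auto simp: realization_carrier_def)

lemma Sx_mono_set:
  assumes "finite T" "S \<subseteq> T" "\<And>x. x \<in> T - S \<Longrightarrow> p x = 0"
  shows "Sx le T p x = Sx le S p x"
  unfolding Sx_def by (rule sum.mono_neutral_right) (use assms in auto)

lemma fp_zero: "p x = 0 \<Longrightarrow> fp le S t p x = 0" by (simp add: fp_def)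
lemma gp_zero: "p x = 0 \<Longrightarrow> gp le S t p x = 0" by (simp add: gp_def fp_def)

lemma fp_nonneg: "0 \<le> p x \<Longrightarrow> 0 \<le> fp le S t p x" by (simp add: fp_def)
lemma gp_nonneg: "0 \<le> p x \<Longrightarrow> 0 \<le> gp le S t p x" by (simp add: fp_def gp_def)

lemma Hm_mono_set:
  assumes "finite T" "S \<subseteq> T" "\<And>x. x \<in> T - S \<Longrightarrow> p x = 0"
  shows "Hm u v le T t p = Hm u v le S t p"
proof -
  have Sxe: "Sx le T p x = Sx le S p x" for x by (rule Sx_mono_set[OF assms])
  have f: "fp le T t p = fp le S t p" "gp le T t p = gp le S t p"
    by (auto simp: fp_def gp_def Sxe)
  show ?thesis unfolding Hm_def f
    by (subst pw_mono[OF assms(1,2)], simp add: assms(3) fp_zero,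
        subst pw_mono[OF assms(1,2)], simp add: assms(3) gp_zero, simp)
qed

lemma Sx_le_sum:
  assumes "finite S" "\<And>x. 0 \<le> p x"
  shows "Sx le S p x \<le> sum p S"
  unfolding Sx_def by (rule sum_mono2) (use assms in auto)

lemma Sx_minus_nonneg:
  assumes "finite S" "\<And>x. 0 \<le> p x" "x \<in> S" "le x x"
  shows "0 \<le> Sx le S p x - p x"
proof -
  have "Sx le S p x = p x + sum p ({y \<in> S. le y x} - {x})"
    unfolding Sx_def using assms by (subst sum.remove[of _ x]) auto
  moreover have "0 \<le> sum p ({y \<in> S. le y x} - {x})" using assms by (simp add: sum_nonneg)
  ultimately show ?thesis by simp
qed

lemma Sx_strict:
  assumes "finite S" "\<And>x. 0 \<le> p x" "x \<in> S" "y \<in> S" "le y x" "y \<noteq> x"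
    and antisym: "\<And>a b. le a b \<Longrightarrow> le b a \<Longrightarrow> a = b"
    and trans: "\<And>a b c. le a b \<Longrightarrow> le b c \<Longrightarrow> le a c" and refl: "\<And>a. le a a"
  shows "Sx le S p y \<le> Sx le S p x - p x"
proof -
  have "Sx le S p x = p x + sum p ({z \<in> S. le z x} - {x})"
    unfolding Sx_def using assms by (subst sum.remove[of _ x]) (auto intro: trans refl)
  moreover have "Sx le S p y \<le> sum p ({z \<in> S. le z x} - {x})"
    unfolding Sx_def
  proof (rule sum_mono2)
    show "{y' \<in> S. le y' y} \<subseteq> {z \<in> S. le z x} - {x}"
      using assms by (auto intro: trans dest: antisym)
  qed (use assms in auto)
  ultimately show ?thesis by simp
qed

lemma chain_max:
  assumes "finite X" "X \<noteq> {}" "\<And>x y. x \<in> X \<Longrightarrow> y \<in> X \<Longrightarrow> le x y \<or> le y x"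
    and trans: "\<And>a b c. le a b \<Longrightarrow> le b c \<Longrightarrow> le a c" and refl: "\<And>a. le a a"
  shows "\<exists>m\<in>X. \<forall>x\<in>X. le x m"
  using assms(1,2,3)
proof (induction X rule: finite_ne_induct)
  case (singleton x) then show ?case using refl by auto
next
  case (insert x F)
  then obtain m where m: "m \<in> F" "\<forall>y\<in>F. le y m" by auto
  show ?case
  proof (cases "le x m")
    case True then show ?thesis using m by auto
  next
    case False
    then have "le m x" using insert.prems m by auto
    then show ?thesis using m refl by (auto intro: trans)
  qed
qed

definition porder :: "('a \<Rightarrow> 'a \<Rightarrow> bool) \<Rightarrow> bool" where
  "porder le \<longleftrightarrow> (\<forall>a. le a a) \<and> (\<forall>a b. le a b \<longrightarrow> le b a \<longrightarrow> a = b) \<and> (\<forall>a b c. le a b \<longrightarrow> le b c \<longrightarrow> le a c)"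

definition hom_ok :: "'a set \<Rightarrow> ('a \<Rightarrow> 'a \<Rightarrow> bool) \<Rightarrow> 'b set \<Rightarrow> ('b \<Rightarrow> 'b \<Rightarrow> bool) \<Rightarrow> ('a \<Rightarrow> 'b) \<Rightarrow> ('a \<Rightarrow> 'b) \<Rightarrow> bool" where
  "hom_ok P le Q leQ u v \<longleftrightarrow> u ` P \<subseteq> Q \<and> v ` P \<subseteq> Q \<and>
     (\<forall>x\<in>P. \<forall>y\<in>P. le x y \<longrightarrow> leQ (u x) (u y)) \<and> (\<forall>x\<in>P. \<forall>y\<in>P. le x y \<longrightarrow> leQ (v x) (v y)) \<and>
     (\<forall>x\<in>P. leQ (u x) (v x))"

lemma is_chain_in_subset: "is_chain_in Q le X \<Longrightarrow> Y \<subseteq> X \<Longrightarrow> is_chain_in Q le Y"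
  unfolding is_chain_in_def by blast

lemma porderD:
  assumes "porder le"
  shows "le a a" "le a b \<Longrightarrow> le b a \<Longrightarrow> a = b" "le a b \<Longrightarrow> le b c \<Longrightarrow> le a c"
  using assms unfolding porder_def by blast+

lemma key_order:
  assumes po: "porder le" and p: "p \<in> realization_carrier P le"
    and x: "x \<in> supp p" "fp le (supp p) t p x \<noteq> 0" and y: "y \<in> supp p" "gp le (supp p) t p y \<noteq> 0"
  shows "le x y"
proof (rule ccontr)
  assume nle: "\<not> le x y"
  note cp = carrier_props[OF p]
  have "le x y \<or> le y x" using cp(2) x y by (auto simp: is_chain_in_def)
  then have yx: "le y x" "y \<noteq> x" using nle porderD(1)[OF po, of x] by auto
  have "Sx le (supp p) p y \<le> Sx le (supp p) p x - p x"
  proof (rule Sx_strict[where S="supp p" and p=p and x=x and y=y and le=le])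
    show "finite (supp p)" by (rule cp(1))
    show "0 \<le> p z" for z by (rule cp(3))
    show "x \<in> supp p" "y \<in> supp p" "le y x" "y \<noteq> x" by (fact x(1) y(1) yx(1) yx(2))+
    show "a = b" if "le a b" "le b a" for a b using porderD(2)[OF po that] .
    show "le a c" if "le a b" "le b c" for a b c using porderD(3)[OF po that] .
    show "le a a" for a by (rule porderD(1)[OF po])
  qed
  moreover have "Sx le (supp p) p x - p x < 1 - t"
    using x(2) cp(3)[of x] by (auto simp: fp_def min_def split: if_splits)
  moreover have "Sx le (supp p) p y > 1 - t"
    using y(2) cp(3)[of y] by (auto simp: fp_def gp_def min_def split: if_splits)
  ultimately show False by linarith
qed

lemma supp_Hm:
  "supp (Hm u v le S t p) \<subseteq> u ` {x\<in>S. fp le S t p x \<noteq> 0} \<union> v ` {x\<in>S. gp le S t p x \<noteq> 0}"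
proof
  fix q assume q: "q \<in> supp (Hm u v le S t p)"
  show "q \<in> u ` {x\<in>S. fp le S t p x \<noteq> 0} \<union> v ` {x\<in>S. gp le S t p x \<noteq> 0}"
  proof (rule ccontr)
    assume nq: "q \<notin> u ` {x\<in>S. fp le S t p x \<noteq> 0} \<union> v ` {x\<in>S. gp le S t p x \<noteq> 0}"
    have "\<forall>x\<in>{x \<in> S. u x = q}. fp le S t p x = 0" using nq by blast
    then have 1: "sum (fp le S t p) {x \<in> S. u x = q} = 0" by (rule sum.neutral)
    have "\<forall>x\<in>{x \<in> S. v x = q}. gp le S t p x = 0" using nq by blast
    then have 2: "sum (gp le S t p) {x \<in> S. v x = q} = 0" by (rule sum.neutral)
    have "Hm u v le S t p q = 0" unfolding Hm_def pw_def using 1 2 by simp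
    then show False using q by (simp add: supp_def)
  qed
qed

lemma Hm_carrier:
  assumes po: "porder le" and poQ: "porder leQ" and ok: "hom_ok P le Q leQ u v"
    and p: "p \<in> realization_carrier P le" and t: "t \<in> {0..1}"
  shows "Hm u v le (supp p) t p \<in> realization_carrier Q leQ"
proof -
  note cp = carrier_props[OF p]
  define S where "S = supp p"
  define H where "H = Hm u v le S t p"
  define A where "A = {x\<in>S. fp le S t p x \<noteq> 0}"
  define B where "B = {x\<in>S. gp le S t p x \<noteq> 0}"
  have SP: "S \<subseteq> P" using cp(2) by (simp add: S_def is_chain_in_def)
  have fS: "finite S" using cp(1) S_def by simp
  have sH: "supp H \<subseteq> u ` A \<union> v ` B" unfolding H_def A_def B_def by (rule supp_Hm)
  have AB: "le x y" if "x \<in> A" "y \<in> B" for x y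
    using key_order[OF po p, of x t y] that by (simp add: A_def B_def S_def)
  have Sch: "le x y \<or> le y x" if "x \<in> S" "y \<in> S" for x y
    using cp(2) that by (auto simp: is_chain_in_def S_def)
  have AS: "A \<subseteq> S" "B \<subseteq> S" by (auto simp: A_def B_def)
  have trQ: "\<And>a b c. leQ a b \<Longrightarrow> leQ b c \<Longrightarrow> leQ a c" using poQ by (simp add: porder_def)
  have um: "leQ (u x) (u y)" "leQ (v x) (v y)" if "x \<in> S" "y \<in> S" "le x y" for x y
  proof -
    have "x \<in> P" "y \<in> P" using that SP by auto
    then show "leQ (u x) (u y)" "leQ (v x) (v y)" using ok that unfolding hom_ok_def by blast+
  qed
  have uv: "leQ (u x) (v x)" if "x \<in> S" for x using ok that SP unfolding hom_ok_def by blast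
  have cA: "leQ (u x) (u y) \<or> leQ (u y) (u x)" if "x \<in> A" "y \<in> A" for x y
  proof -
    have "le x y \<or> le y x" using Sch that AS by blast
    then show ?thesis using um(1)[of x y] um(1)[of y x] that AS by blast
  qed
  have cB: "leQ (v x) (v y) \<or> leQ (v y) (v x)" if "x \<in> B" "y \<in> B" for x y
  proof -
    have "le x y \<or> le y x" using Sch that AS by blast
    then show ?thesis using um(2)[of x y] um(2)[of y x] that AS by blast
  qed
  have cAB: "leQ (u x) (v y)" if "x \<in> A" "y \<in> B" for x y
  proof -
    have "leQ (u x) (u y)" using AB[OF that] um(1)[of x y] that AS by blast
    moreover have "leQ (u y) (v y)" using uv[of y] that AS by blast
    ultimately show ?thesis by (rule trQ)
  qed
  have chain: "is_chain_in Q leQ (u ` A \<union> v ` B)"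
    unfolding is_chain_in_def
  proof (intro conjI ballI)
    have "u ` A \<subseteq> Q" "v ` B \<subseteq> Q" using AS SP ok unfolding hom_ok_def by blast+
    then show "u ` A \<union> v ` B \<subseteq> Q" by blast
  next
    fix q1 q2 assume q1: "q1 \<in> u ` A \<union> v ` B" and q2: "q2 \<in> u ` A \<union> v ` B"
    show "leQ q1 q2 \<or> leQ q2 q1"
    proof (cases "q1 \<in> u ` A")
      case True
      then obtain x where x: "x \<in> A" "q1 = u x" by blast
      show ?thesis
      proof (cases "q2 \<in> u ` A")
        case True
        then obtain y where y: "y \<in> A" "q2 = u y" by blast
        show ?thesis using cA[OF x(1) y(1)] x y by simp
      next
        case False
        then obtain y where y: "y \<in> B" "q2 = v y" using q2 by blast
        show ?thesis using cAB[OF x(1) y(1)] x y by simp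
      qed
    next
      case False
      then obtain x where x: "x \<in> B" "q1 = v x" using q1 by blast
      show ?thesis
      proof (cases "q2 \<in> u ` A")
        case True
        then obtain y where y: "y \<in> A" "q2 = u y" by blast
        show ?thesis using cAB[OF y(1) x(1)] x y by simp
      next
        case False
        then obtain y where y: "y \<in> B" "q2 = v y" using q2 by blast
        show ?thesis using cB[OF x(1) y(1)] x y by simp
      qed
    qed
  qed
  have fin: "finite (u ` A \<union> v ` B)" using AS fS finite_subset by blast
  have nonneg: "0 \<le> H q" for q
    unfolding H_def Hm_def pw_def using cp(3)
    by (intro add_nonneg_nonneg sum_nonneg fp_nonneg gp_nonneg) auto
  have "sum H (supp H) = sum H (u ` S \<union> v ` S)"
  proof (rule sum.mono_neutral_left)
    show "finite (u ` S \<union> v ` S)" using fS by simp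
    show "supp H \<subseteq> u ` S \<union> v ` S" using sH AS by blast
  qed (auto simp: supp_def)
  also have "\<dots> = sum (pw u S (fp le S t p)) (u ` S \<union> v ` S) + sum (pw v S (gp le S t p)) (u ` S \<union> v ` S)"
    unfolding H_def Hm_def by (simp add: sum.distrib)
  also have "\<dots> = sum (fp le S t p) S + sum (gp le S t p) S"
    using fS by (simp add: sum_pw)
  also have "\<dots> = sum p S" by (simp add: gp_def sum.distrib[symmetric])
  also have "\<dots> = 1" using cp(4) S_def by simp
  finally have "sum H (supp H) = 1" .
  moreover have "finite (supp H)" using fin sH by (rule finite_subset[rotated])
  moreover have "is_chain_in Q leQ (supp H)" using chain sH by (rule is_chain_in_subset)
  ultimately have "H \<in> realization_carrier Q leQ"
    unfolding realization_carrier_def using nonneg by blast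
  then show ?thesis by (simp add: H_def S_def)
qed

lemma cont_proj_simplex:
  "continuous_map (prod_topology (top_of_set {0..1::real}) (simplex_topology P le c)) euclideanreal (\<lambda>z. snd z y)"
proof -
  have "continuous_map (simplex_topology P le c) euclideanreal (\<lambda>p. p y)"
    unfolding simplex_topology_def
    by (rule continuous_map_from_subtopology) (rule continuous_map_product_projection, simp)
  from continuous_map_compose[OF continuous_map_snd this] show ?thesis by (simp add: o_def)
qed

lemma cont_fst01:
  "continuous_map (prod_topology (top_of_set {0..1::real}) X) euclideanreal fst"
proof -
  have "continuous_map (top_of_set {0..1::real}) euclideanreal id"
    by (rule continuous_map_from_subtopology) (rule continuous_map_id)
  from continuous_map_compose[OF continuous_map_fst this] show ?thesis by (simp add: o_def)
qed

lemma cont_Sx: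
  "finite c \<Longrightarrow> continuous_map (prod_topology (top_of_set {0..1::real}) (simplex_topology P le c)) euclideanreal
     (\<lambda>z. Sx le c (snd z) x)"
  unfolding Sx_def by (intro continuous_map_sum cont_proj_simplex) auto

lemma cont_fp:
  "finite c \<Longrightarrow> continuous_map (prod_topology (top_of_set {0..1::real}) (simplex_topology P le c)) euclideanreal
     (\<lambda>z. fp le c (fst z) (snd z) x)"
  unfolding fp_def by (intro continuous_intros cont_Sx cont_fst01 cont_proj_simplex)

lemma cont_gp:
  "finite c \<Longrightarrow> continuous_map (prod_topology (top_of_set {0..1::real}) (simplex_topology P le c)) euclideanreal
     (\<lambda>z. gp le c (fst z) (snd z) x)"
  unfolding gp_def by (intro continuous_intros cont_fp cont_proj_simplex)

lemma cont_Hm_prod: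
  assumes "finite c"
  shows "continuous_map (prod_topology (top_of_set {0..1::real}) (simplex_topology P le c))
      (product_topology (\<lambda>_. euclideanreal) UNIV) (\<lambda>z. Hm u v le c (fst z) (snd z))"
  unfolding continuous_map_componentwise_UNIV Hm_def pw_def
  using assms by (intro allI continuous_intros cont_fp cont_gp) auto

lemma chain_min:
  assumes "finite X" "X \<noteq> {}" "\<And>x y. x \<in> X \<Longrightarrow> y \<in> X \<Longrightarrow> le x y \<or> le y x"
    and trans: "\<And>a b c. le a b \<Longrightarrow> le b c \<Longrightarrow> le a c" and refl: "\<And>a. le a a"
  shows "\<exists>m\<in>X. \<forall>x\<in>X. le m x"
  using chain_max[of X "\<lambda>a b. le b a"] assms by blast

lemma closed_simplex_supp: "p \<in> closed_simplex P le c \<Longrightarrow> supp p \<subseteq> c"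
  by (simp add: closed_simplex_def)

lemma fp_supp_eq:
  assumes "finite c" "supp p \<subseteq> c"
  shows "fp le c t p x = fp le (supp p) t p x" "gp le c t p x = gp le (supp p) t p x"
proof -
  have "Sx le c p x = Sx le (supp p) p x"
    by (rule Sx_mono_set) (use assms in \<open>auto simp: supp_def\<close>)
  then show "fp le c t p x = fp le (supp p) t p x" "gp le c t p x = gp le (supp p) t p x"
    by (simp_all add: fp_def gp_def)
qed

lemma Hm_supp_eq:
  assumes "finite c" "supp p \<subseteq> c"
  shows "Hm u v le c t p = Hm u v le (supp p) t p"
  by (rule Hm_mono_set) (use assms in \<open>auto simp: supp_def\<close>)

lemma cont_Hm_simplex:
  assumes po: "porder le" and poQ: "porder leQ" and ok: "hom_ok P le Q leQ u v"
    and c: "finite c" "is_chain_in P le c"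
  shows "continuous_map (prod_topology (top_of_set {0..1::real}) (simplex_topology P le c))
      (realization Q leQ) (\<lambda>z. Hm u v le c (fst z) (snd z))"
proof -
  define Z where "Z = prod_topology (top_of_set {0..1::real}) (simplex_topology P le c)"
  define G where "G z = Hm u v le c (fst z) (snd z)" for z
  have Gc: "continuous_map Z (product_topology (\<lambda>_. euclideanreal) UNIV) G"
    unfolding Z_def G_def by (rule cont_Hm_prod[OF c(1)])
  have tsp: "topspace Z = {0..1} \<times> closed_simplex P le c" by (simp add: Z_def topspace_simplex)
  have cP: "c \<subseteq> P" using c(2) by (simp add: is_chain_in_def)
  have cch: "le x y \<or> le y x" if "x \<in> c" "y \<in> c" for x y using c(2) that by (simp add: is_chain_in_def)
  have Gcar: "G z \<in> realization_carrier Q leQ" if zt0: "z \<in> topspace Z" for z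
  proof -
    obtain t p where z: "z = (t, p)" "t \<in> {0..1}" "p \<in> closed_simplex P le c" using zt0 tsp by auto
    have "G z = Hm u v le (supp p) t p"
      unfolding G_def z using Hm_supp_eq[OF c(1) closed_simplex_supp[OF z(3)]] by simp
    moreover have "p \<in> realization_carrier P le" using z(3) closed_simplex_sub by blast
    ultimately show ?thesis using Hm_carrier[OF po poQ ok _ z(2)] by simp
  qed
  define N where "N k z = (\<Sum>x\<in>{x\<in>c. \<not> le x k}. \<bar>fp le c (fst z) (snd z) x\<bar>) + (\<Sum>x\<in>{x\<in>c. \<not> le k x}. \<bar>gp le c (fst z) (snd z) x\<bar>)" for k z
  define Zk where "Zk k = {z \<in> topspace Z. N k z \<in> {0}}" for k
  define ck where "ck k = u ` {x\<in>c. le x k} \<union> v ` {x\<in>c. le k x}" for k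
  have Zk_closed: "closedin Z (Zk k)" for k
  proof -
    have "continuous_map Z euclideanreal (N k)"
      unfolding N_def Z_def using c(1) by (intro continuous_intros cont_fp cont_gp) auto
    then show ?thesis unfolding Zk_def
      by (rule closedin_continuous_map_preimage) (simp add: closed_closedin[symmetric])
  qed
  have Nzero: "fp le c (fst z) (snd z) x = 0" if "z \<in> Zk k" "x \<in> c" "\<not> le x k" for z k x
  proof -
    have "N k z = 0" using that by (simp add: Zk_def)
    then have "(\<Sum>x\<in>{x\<in>c. \<not> le x k}. \<bar>fp le c (fst z) (snd z) x\<bar>) = 0"
      unfolding N_def by (smt (verit, ccfv_SIG) sum_nonneg abs_ge_zero)
    then have "\<forall>x\<in>{x\<in>c. \<not> le x k}. \<bar>fp le c (fst z) (snd z) x\<bar> = 0"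
      using c(1) by (subst (asm) sum_nonneg_eq_0_iff) auto
    then show ?thesis using that by auto
  qed
  have Nzero2: "gp le c (fst z) (snd z) x = 0" if "z \<in> Zk k" "x \<in> c" "\<not> le k x" for z k x
  proof -
    have "N k z = 0" using that by (simp add: Zk_def)
    then have "(\<Sum>x\<in>{x\<in>c. \<not> le k x}. \<bar>gp le c (fst z) (snd z) x\<bar>) = 0"
      unfolding N_def by (smt (verit, ccfv_SIG) sum_nonneg abs_ge_zero)
    then have "\<forall>x\<in>{x\<in>c. \<not> le k x}. \<bar>gp le c (fst z) (snd z) x\<bar> = 0"
      using c(1) by (subst (asm) sum_nonneg_eq_0_iff) auto
    then show ?thesis using that by auto
  qed
  have trQ: "\<And>a b c. leQ a b \<Longrightarrow> leQ b c \<Longrightarrow> leQ a c" using porderD(3)[OF poQ] by blast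
  have trP: "\<And>a b c. le a b \<Longrightarrow> le b c \<Longrightarrow> le a c" using porderD(3)[OF po] by blast
  have um: "leQ (u x) (u y)" "leQ (v x) (v y)" if "x \<in> c" "y \<in> c" "le x y" for x y
  proof -
    have "x \<in> P" "y \<in> P" using that cP by auto
    then show "leQ (u x) (u y)" "leQ (v x) (v y)" using ok that unfolding hom_ok_def by blast+
  qed
  have uv: "leQ (u x) (v x)" if "x \<in> c" for x using ok that cP unfolding hom_ok_def by blast
  have ck_chain: "is_chain_in Q leQ (ck k)" if "k \<in> c" for k
    unfolding is_chain_in_def
  proof (intro conjI ballI)
    show "ck k \<subseteq> Q" using ok cP unfolding ck_def hom_ok_def by blast
  next
    fix q1 q2 assume q1: "q1 \<in> ck k" and q2: "q2 \<in> ck k"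
    have cu: "leQ (u x) (v y)" if "x \<in> c" "y \<in> c" "le x k" "le k y" for x y
    proof -
      have "leQ (u x) (u y)" using um(1)[of x y] that trP by blast
      then show ?thesis using uv[of y] that trQ by blast
    qed
    show "leQ q1 q2 \<or> leQ q2 q1"
    proof (cases "q1 \<in> u ` {x\<in>c. le x k}")
      case True
      then obtain x where x: "x \<in> c" "le x k" "q1 = u x" by blast
      show ?thesis
      proof (cases "q2 \<in> u ` {x\<in>c. le x k}")
        case True
        then obtain y where y: "y \<in> c" "le y k" "q2 = u y" by blast
        show ?thesis using cch[OF x(1) y(1)] um(1)[of x y] um(1)[of y x] x y by blast
      next
        case False
        then obtain y where y: "y \<in> c" "le k y" "q2 = v y" using q2 by (auto simp: ck_def)
        show ?thesis using cu[OF x(1) y(1) x(2) y(2)] x y by simp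
      qed
    next
      case False
      then obtain x where x: "x \<in> c" "le k x" "q1 = v x" using q1 by (auto simp: ck_def)
      show ?thesis
      proof (cases "q2 \<in> u ` {x\<in>c. le x k}")
        case True
        then obtain y where y: "y \<in> c" "le y k" "q2 = u y" by blast
        show ?thesis using cu[OF y(1) x(1) y(2) x(2)] x y by simp
      next
        case False
        then obtain y where y: "y \<in> c" "le k y" "q2 = v y" using q2 by (auto simp: ck_def)
        show ?thesis using cch[OF x(1) y(1)] um(2)[of x y] um(2)[of y x] x y by blast
      qed
    qed
  qed
  have ck_fin: "finite (ck k)" for k using c(1) by (simp add: ck_def)
  have G_in: "G z \<in> closed_simplex Q leQ (ck k)" if "z \<in> Zk k" for z k
  proof -
    have zt: "z \<in> topspace Z" using that by (simp add: Zk_def)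
    have "supp (G z) \<subseteq> u ` {x\<in>c. fp le c (fst z) (snd z) x \<noteq> 0} \<union> v ` {x\<in>c. gp le c (fst z) (snd z) x \<noteq> 0}"
      unfolding G_def by (rule supp_Hm)
    also have "\<dots> \<subseteq> ck k"
      unfolding ck_def using Nzero[OF that] Nzero2[OF that] by blast
    finally show ?thesis using Gcar[OF zt] by (simp add: closed_simplex_def)
  qed
  have cover: "\<exists>k. k \<in> c \<and> z \<in> Zk k" if zt: "z \<in> topspace Z" for z
  proof -
    obtain t p where z: "z = (t, p)" "t \<in> {0..1}" "p \<in> closed_simplex P le c" using zt tsp by auto
    have pc: "p \<in> realization_carrier P le" using z(3) closed_simplex_sub by blast
    have sp: "supp p \<subseteq> c" by (rule closed_simplex_supp[OF z(3)])
    define A where "A = {x\<in>c. fp le c t p x \<noteq> 0}"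
    define B where "B = {x\<in>c. gp le c t p x \<noteq> 0}"
    have Asupp: "x \<in> supp p" if "x \<in> A" for x
      using that fp_zero[of p x le c t] by (auto simp: A_def supp_def)
    have Bsupp: "x \<in> supp p" if "x \<in> B" for x
      using that gp_zero[of p x le c t] by (auto simp: B_def supp_def)
    have AB: "le x y" if "x \<in> A" "y \<in> B" for x y
      using key_order[OF po pc Asupp[OF that(1)] _ Bsupp[OF that(2)]] that
        fp_supp_eq[OF c(1) sp] by (auto simp: A_def B_def)
    have "supp p \<noteq> {}" using pc by (auto simp: realization_carrier_def)
    then have cne: "c \<noteq> {}" using sp by blast
    obtain k where k: "k \<in> c" "\<forall>x\<in>A. le x k" "\<forall>y\<in>B. le k y"
    proof (cases "A = {}")
      case True
      have "\<exists>m\<in>c. \<forall>x\<in>c. le m x"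
      proof (rule chain_min[of c le])
        show "finite c" by (rule c(1))
        show "c \<noteq> {}" by (rule cne)
        show "le x y \<or> le y x" if "x \<in> c" "y \<in> c" for x y using cch[OF that] .
        show "le a b" if "le a d" "le d b" for a b d using trP[OF that] .
        show "le a a" for a by (rule porderD(1)[OF po])
      qed
      then obtain m where "m \<in> c" "\<forall>x\<in>c. le m x" by blast
      then show ?thesis using that True by (auto simp: B_def)
    next
      case False
      have "finite A" using c(1) by (simp add: A_def)
      have "\<exists>m\<in>A. \<forall>x\<in>A. le x m"
      proof (rule chain_max[of A le])
        show "finite A" by fact
        show "A \<noteq> {}" by (rule False)
        show "le x y \<or> le y x" if "x \<in> A" "y \<in> A" for x y using cch that by (auto simp: A_def)
        show "le a b" if "le a d" "le d b" for a b d using trP[OF that] .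
        show "le a a" for a by (rule porderD(1)[OF po])
      qed
      then obtain m where m: "m \<in> A" "\<forall>x\<in>A. le x m" by blast
      then show ?thesis using that AB by (auto simp: A_def)
    qed
    have "N k z = 0"
    proof -
      have "\<forall>x\<in>{x\<in>c. \<not> le x k}. \<bar>fp le c (fst z) (snd z) x\<bar> = 0"
        using k(2) z(1) by (auto simp: A_def)
      moreover have "\<forall>x\<in>{x\<in>c. \<not> le k x}. \<bar>gp le c (fst z) (snd z) x\<bar> = 0"
        using k(3) z(1) by (auto simp: B_def)
      ultimately show ?thesis unfolding N_def by simp
    qed
    then show ?thesis using k zt by (auto simp: Zk_def)
  qed
  have "continuous_map Z (realization Q leQ) G"
  proof (rule pasting_lemma_closed[where I=c and X=Z and T=Zk and f="\<lambda>k. G" and g=G])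
    show "finite c" by (rule c(1))
    show "closedin Z (Zk k)" for k by (rule Zk_closed)
    show "continuous_map (subtopology Z (Zk k)) (realization Q leQ) G" if "k \<in> c" for k
    proof (rule cont_into_real[where c="ck k"])
      show "continuous_map (subtopology Z (Zk k)) (powertop_real UNIV) G"
        by (rule continuous_map_from_subtopology[OF Gc])
      show "G z \<in> closed_simplex Q leQ (ck k)" if "z \<in> topspace (subtopology Z (Zk k))" for z
        using that G_in by auto
    qed (use ck_fin ck_chain that in auto)
  qed (use cover in auto)
  then show ?thesis unfolding Z_def G_def[abs_def] .
qed

lemma push_homotopic:
  assumes po: "porder le" and poQ: "porder leQ" and ok: "hom_ok P le Q leQ u v"
  shows "homotopic_with (\<lambda>_. True) (realization P le) (realization Q leQ) (push u) (push v)"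
proof -
  define h where "h z = Hm u v le (supp (snd z)) (fst z) (snd z)" for z
  have hc: "continuous_map (prod_topology (top_of_set {0..1::real}) (realization P le)) (realization Q leQ) h"
  proof (rule cont_from_prod_real)
    show "h (t, x) \<in> topspace (realization Q leQ)" if "t \<in> {0..1}" "x \<in> realization_carrier P le" for t x
      using Hm_carrier[OF po poQ ok that(2) that(1)] by (simp add: h_def topspace_real)
    show "continuous_map (prod_topology (top_of_set {0..1::real}) (simplex_topology P le c)) (realization Q leQ) h"
      if c: "finite c" "is_chain_in P le c" for c
    proof (rule continuous_map_eq[OF cont_Hm_simplex[OF po poQ ok c]])
      fix z assume "z \<in> topspace (prod_topology (top_of_set {0..1::real}) (simplex_topology P le c))"
      then have "snd z \<in> closed_simplex P le c" by (auto simp: topspace_simplex)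
      then show "Hm u v le c (fst z) (snd z) = h z"
        unfolding h_def using Hm_supp_eq[OF c(1) closed_simplex_supp] by blast
    qed
  qed
  have h0: "h (0, p) = push u p" if p: "p \<in> realization_carrier P le" for p
  proof -
    note cp = carrier_props[OF p]
    define S where "S = supp p"
    have fpx: "fp le S 0 p x = p x" if "x \<in> S" for x
    proof -
      have "Sx le S p x \<le> sum p S" by (rule Sx_le_sum) (use cp in \<open>auto simp: S_def\<close>)
      then have "Sx le S p x \<le> 1" using cp(4) by (simp add: S_def)
      then show ?thesis using cp(3)[of x] by (simp add: fp_def)
    qed
    have "pw u S (fp le S 0 p) = pw u S p" by (rule pw_cong) (auto simp: fpx)
    moreover have "pw v S (gp le S 0 p) = pw v S (\<lambda>_. 0)" by (rule pw_cong) (auto simp: fpx gp_def)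
    moreover have "pw v S (\<lambda>_. 0) = (\<lambda>_. 0)" by (simp add: pw_def)
    ultimately show ?thesis by (simp add: h_def Hm_def push_def S_def)
  qed
  have h1: "h (1, p) = push v p" if p: "p \<in> realization_carrier P le" for p
  proof -
    note cp = carrier_props[OF p]
    define S where "S = supp p"
    have fpx: "fp le S 1 p x = 0" if "x \<in> S" for x
    proof -
      have "0 \<le> Sx le S p x - p x"
        by (rule Sx_minus_nonneg) (use cp that porderD(1)[OF po] in \<open>auto simp: S_def\<close>)
      then show ?thesis using cp(3)[of x] by (simp add: fp_def)
    qed
    have "pw u S (fp le S 1 p) = pw u S (\<lambda>_. 0)" by (rule pw_cong) (auto simp: fpx)
    moreover have "pw v S (gp le S 1 p) = pw v S p" by (rule pw_cong) (auto simp: fpx gp_def)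
    moreover have "pw u S (\<lambda>_. 0) = (\<lambda>_. 0)" by (simp add: pw_def)
    ultimately show ?thesis by (simp add: h_def Hm_def push_def S_def)
  qed
  show ?thesis
    apply (subst homotopic_with, simp)
    apply (rule exI[of _ h])
    using hc h0 h1 by (simp add: topspace_real)
qed

lemma push_comp:
  assumes "finite (supp p)"
  shows "push g (push f p) = push (g \<circ> f) p"
proof
  fix q
  define S where "S = supp p"
  have fS: "finite S" using assms by (simp add: S_def)
  have "push g (push f p) = pw g (f ` S) (push f p)"
    unfolding push_def[of g]
  proof (rule pw_mono[symmetric])
    show "finite (f ` S)" using fS by simp
    show "supp (push f p) \<subseteq> f ` S"
    proof
      fix y assume y: "y \<in> supp (push f p)"
      show "y \<in> f ` S"
      proof (rule ccontr)
        assume "y \<notin> f ` S"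
        then have "{x \<in> S. f x = y} = {}" by auto
        moreover have "push f p y = sum p {x \<in> S. f x = y}" by (simp add: push_def pw_def S_def)
        ultimately have "push f p y = 0" by (metis sum.empty)
        then show False using y by (simp add: supp_def)
      qed
    qed
    show "push f p x = 0" if "x \<in> f ` S - supp (push f p)" for x using that by (simp add: supp_def)
  qed
  then have "push g (push f p) q = sum (\<lambda>y. sum p {x \<in> S. f x = y}) {y \<in> f ` S. g y = q}"
    by (simp add: pw_def push_def S_def)
  also have "\<dots> = sum (\<lambda>y. sum p {x \<in> {x \<in> S. g (f x) = q}. f x = y}) {y \<in> f ` S. g y = q}"
  proof (rule sum.cong)
    fix y assume "y \<in> {y \<in> f ` S. g y = q}"
    then have "{x \<in> S. f x = y} = {x \<in> {x \<in> S. g (f x) = q}. f x = y}" by auto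
    then show "sum p {x \<in> S. f x = y} = sum p {x \<in> {x \<in> S. g (f x) = q}. f x = y}" by simp
  qed simp
  also have "\<dots> = sum p {x \<in> S. g (f x) = q}"
    by (rule sum.group) (use fS in auto)
  also have "\<dots> = push (g \<circ> f) p q" by (simp add: push_def pw_def S_def)
  finally show "push g (push f p) q = push (g \<circ> f) p q" .
qed

lemma push_id: "push (\<lambda>x. x) p = p"
proof
  fix q
  show "push (\<lambda>x. x) p q = p q"
  proof (cases "q \<in> supp p")
    case True
    then have "{x \<in> supp p. x = q} = {q}" by auto
    then show ?thesis by (simp add: push_def pw_def)
  next
    case False
    then have "{x \<in> supp p. x = q} = {}" by auto
    then show ?thesis using False by (simp add: push_def pw_def supp_def)
  qed
qed

lemma push_cong: "(\<And>x. x \<in> supp p \<Longrightarrow> f x = f' x) \<Longrightarrow> push f p = push f' p"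
  unfolding push_def by (rule pw_cong) auto

lemma porder_subset: "porder (\<subseteq>)" by (auto simp: porder_def)
lemma porder_box: "porder box_le" by (auto simp: porder_def box_le_def prod_eq_iff)

lemma push_cont:
  assumes "porder le" "porder leQ" "hom_ok P le Q leQ u u"
  shows "continuous_map (realization P le) (realization Q leQ) (push u)"
  using homotopic_with_imp_continuous_maps[OF push_homotopic[OF assms]] by blast

theorem corollary3p4:
  fixes V :: "'v set" and E :: "('v \<times> 'v) set" and eps :: "'v \<Rightarrow> nat"
  assumes "is_bigraph V E eps"
  shows "realization (clique_poset (expK2_V V eps) (expK2_E V E eps)) (\<subseteq>)
           homotopy_equivalent_space
         realization (box_poset V E eps) box_le"
proof -
  have symE: "sym E" using assms by (simp add: is_bigraph_def is_graph_def)
  define PC where "PC = clique_poset (expK2_V V eps) (expK2_E V E eps)"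
  define PB where "PB = box_poset V E eps"
  define F :: "('v \<times> 'v) set \<Rightarrow> 'v set \<times> 'v set" where "F s = (fst ` s, snd ` s)" for s
  define G :: "'v set \<times> 'v set \<Rightarrow> ('v \<times> 'v) set" where "G ab = fst ab \<times> snd ab" for ab
  have FPB: "F s \<in> PB" if "s \<in> PC" for s
  proof -
    have s: "finite s" "s \<noteq> {}" "s \<subseteq> expK2_V V eps" "s \<times> s \<subseteq> expK2_E V E eps"
      using that by (auto simp: PC_def clique_poset_def)
    have "fst ` s \<times> snd ` s \<subseteq> E"
    proof
      fix ab assume "ab \<in> fst ` s \<times> snd ` s"
      then obtain f g where fg: "f \<in> s" "g \<in> s" "ab = (fst f, snd g)" by auto
      then have "(f, g) \<in> expK2_E V E eps" using s(4) by blast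
      then show "ab \<in> E" using fg by (simp add: expK2_E_def)
    qed
    moreover have "fst ` s \<subseteq> part V eps 0" "snd ` s \<subseteq> part V eps 1"
      using s(3) by (auto simp: expK2_V_def)
    ultimately show ?thesis using s(1,2) by (simp add: F_def PB_def box_poset_def)
  qed
  have GPC: "G ab \<in> PC" if "ab \<in> PB" for ab
  proof -
    obtain A B where ab: "ab = (A, B)" by (cases ab)
    have AB: "finite A" "A \<noteq> {}" "A \<subseteq> part V eps 0" "finite B" "B \<noteq> {}" "B \<subseteq> part V eps 1" "A \<times> B \<subseteq> E"
      using that by (auto simp: PB_def box_poset_def ab)
    have "(A \<times> B) \<times> (A \<times> B) \<subseteq> expK2_E V E eps"
    proof
      fix z assume "z \<in> (A \<times> B) \<times> (A \<times> B)"
      then obtain a b a' b' where z: "z = ((a, b), (a', b'))" "a \<in> A" "b \<in> B" "a' \<in> A" "b' \<in> B" by auto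
      have "(a, b') \<in> E" "(a', b) \<in> E" using AB(7) z by auto
      then have "(b, a') \<in> E" "(a, b') \<in> E" using symE by (auto dest: symD)
      then show "z \<in> expK2_E V E eps" using z AB by (auto simp: expK2_E_def expK2_V_def)
    qed
    then show ?thesis using AB by (auto simp: PC_def clique_poset_def G_def ab expK2_V_def)
  qed
  have okF: "hom_ok PC (\<subseteq>) PB box_le F F"
    unfolding hom_ok_def using FPB by (auto simp: box_le_def F_def)
  have okG: "hom_ok PB box_le PC (\<subseteq>) G G"
    unfolding hom_ok_def using GPC by (auto simp: box_le_def G_def)
  have okGF: "hom_ok PC (\<subseteq>) PC (\<subseteq>) (\<lambda>x. x) (G \<circ> F)"
    unfolding hom_ok_def using GPC FPB by (auto simp: G_def F_def image_iff) (metis fst_conv snd_conv)+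
  have FG: "F (G ab) = ab" if "ab \<in> PB" for ab
  proof -
    obtain A B where ab: "ab = (A, B)" by (cases ab)
    have "A \<noteq> {}" "B \<noteq> {}" using that by (auto simp: PB_def box_poset_def ab)
    then show ?thesis by (simp add: F_def G_def ab)
  qed
  let ?XC = "realization PC (\<subseteq>)" and ?XB = "realization PB box_le"
  have cF: "continuous_map ?XC ?XB (push F)" by (rule push_cont[OF porder_subset porder_box okF])
  have cG: "continuous_map ?XB ?XC (push G)" by (rule push_cont[OF porder_box porder_subset okG])
  have h1: "homotopic_with (\<lambda>_. True) ?XC ?XC (push G \<circ> push F) id"
  proof -
    have a: "homotopic_with (\<lambda>_. True) ?XC ?XC (push G \<circ> push F) (push (G \<circ> F))"
    proof (rule homotopic_with_equal)
      show "continuous_map ?XC ?XC (push G \<circ> push F)" using cF cG by (rule continuous_map_compose)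
      show "(push G \<circ> push F) x = push (G \<circ> F) x" if "x \<in> topspace ?XC" for x
        using that push_comp[of x G F] by (simp add: topspace_real realization_carrier_def)
    qed auto
    have b: "homotopic_with (\<lambda>_. True) ?XC ?XC (push (G \<circ> F)) (push (\<lambda>x. x))"
      using push_homotopic[OF porder_subset porder_subset okGF] homotopic_with_sym by blast
    have c: "homotopic_with (\<lambda>_. True) ?XC ?XC (push (\<lambda>x. x)) id"
    proof (rule homotopic_with_equal)
      show "continuous_map ?XC ?XC (push (\<lambda>x. x))"
        using homotopic_with_imp_continuous_maps[OF b] by blast
    qed (auto simp: push_id)
    show ?thesis using homotopic_with_trans[OF homotopic_with_trans[OF a b] c] .
  qed
  have h2: "homotopic_with (\<lambda>_. True) ?XB ?XB (push F \<circ> push G) id"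
  proof (rule homotopic_with_equal)
    show "continuous_map ?XB ?XB (push F \<circ> push G)" using cG cF by (rule continuous_map_compose)
    fix x assume "x \<in> topspace ?XB"
    then have x: "x \<in> realization_carrier PB box_le" by (simp add: topspace_real)
    then have "supp x \<subseteq> PB" by (auto simp: realization_carrier_def is_chain_in_def)
    then have "push (F \<circ> G) x = push (\<lambda>x. x) x" by (intro push_cong) (auto simp: FG)
    then show "(push F \<circ> push G) x = id x"
      using push_comp[of x F G] x by (simp add: realization_carrier_def push_id)
  qed auto
  show ?thesis
    unfolding homotopy_equivalent_space_def PC_def[symmetric] PB_def[symmetric]
    using cF cG h1 h2 by blast
qed

end
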